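(* For all integers $N,\ell\ge1$ and $k$ with $\ell+1\le k\le N$, the fractional chromatic number of $\mathcal U_{N,\ell,k}$ is at most $4\ell$.
   Context: $[N]=\{1,\dots,N\}$, $S_N$ is the set of permutations of $[N]$. For $\pi,\sigma\in S_N$, $\delta(\pi,\sigma)=\max_{i\in[N]}|\pi^{-1}(i)-\sigma^{-1}(i)|$. For $1\le k\le N$, $S_{N,k}$ is the set of injective maps $[k]\to[N]$; a permutation $\pi'\in S_N$ extends $\pi\in S_{N,k}$ if $\pi'(i)=\pi(i)$ for all $i\in[k]$. For $\pi,\sigma\in S_{N,k}$, $\delta(\pi,\sigma)=\min\{\delta(\pi',\sigma'):\pi',\sigma'\in S_N$ extending $\pi,\sigma$ respectively$\}$. The $k$-restricted uncertainty graph $\mathcal U_{N,\ell,k}$ has vertex set $S_{N,k}$, with $\pi\sim\sigma$ iff $\pi(1)\ne\sigma(1)$ and $\delta(\pi,\sigma)\le\ell$. The fractional chromatic number of $G$ is the least real $w$ such that there exist independent sets $I_1,\dots,I_t$ with nonnegative weights $w_1,\dots,w_t$, $\sum_j w_j=w$, and $\sum_{j:u\in I_j}w_j\ge1$ for every vertex $u$. *)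

theory Defs
  imports Complex_Main "HOL-Combinatorics.Permutations"
begin

text \<open>Permutations of [N] are functions nat => nat with p permutes {1..N}.\<close>

definition perm_dist :: "nat \<Rightarrow> (nat \<Rightarrow> nat) \<Rightarrow> (nat \<Rightarrow> nat) \<Rightarrow> int" where
  "perm_dist N p s = Max ((\<lambda>i. \<bar>int (inv p i) - int (inv s i)\<bar>) ` {1..N})"

definition partial_perms :: "nat \<Rightarrow> nat \<Rightarrow> (nat \<Rightarrow> nat) set" where
  "partial_perms N k = {f. inj_on f {1..k} \<and> f ` {1..k} \<subseteq> {1..N} \<and> (\<forall>i. i \<notin> {1..k} \<longrightarrow> f i = 0)}"

definition extends :: "nat \<Rightarrow> (nat \<Rightarrow> nat) \<Rightarrow> (nat \<Rightarrow> nat) \<Rightarrow> bool" where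
  "extends k p f \<longleftrightarrow> (\<forall>i\<in>{1..k}. p i = f i)"

definition partial_perm_dist :: "nat \<Rightarrow> nat \<Rightarrow> (nat \<Rightarrow> nat) \<Rightarrow> (nat \<Rightarrow> nat) \<Rightarrow> int" where
  "partial_perm_dist N k f g = Min {perm_dist N p s | p s.
      p permutes {1..N} \<and> s permutes {1..N} \<and> extends k p f \<and> extends k s g}"

definition unc_adj :: "nat \<Rightarrow> nat \<Rightarrow> nat \<Rightarrow> (nat \<Rightarrow> nat) \<Rightarrow> (nat \<Rightarrow> nat) \<Rightarrow> bool" where
  "unc_adj N l k f g \<longleftrightarrow> f 1 \<noteq> g 1 \<and> partial_perm_dist N k f g \<le> int l"

definition independent_set :: "'a set \<Rightarrow> ('a \<Rightarrow> 'a \<Rightarrow> bool) \<Rightarrow> 'a set \<Rightarrow> bool" where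
  "independent_set V E I \<longleftrightarrow> I \<subseteq> V \<and> (\<forall>u\<in>I. \<forall>v\<in>I. \<not> E u v)"

definition fractional_colouring_weight :: "'a set \<Rightarrow> ('a \<Rightarrow> 'a \<Rightarrow> bool) \<Rightarrow> real \<Rightarrow> bool" where
  "fractional_colouring_weight V E w \<longleftrightarrow>
     (\<exists>(I :: nat \<Rightarrow> 'a set) (ws :: nat \<Rightarrow> real) (t :: nat).
        (\<forall>j<t. independent_set V E (I j)) \<and> (\<forall>j<t. ws j \<ge> 0) \<and>
        (\<Sum>j<t. ws j) = w \<and>
        (\<forall>u\<in>V. (\<Sum>j\<in>{j. j < t \<and> u \<in> I j}. ws j) \<ge> 1))"

definition fractional_chromatic_number :: "'a set \<Rightarrow> ('a \<Rightarrow> 'a \<Rightarrow> bool) \<Rightarrow> real" where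
  "fractional_chromatic_number V E = Inf {w. fractional_colouring_weight V E w}"

end

theory Submission imports Defs begin

lemma extension_exists:
  assumes f: "f \<in> partial_perms N k" and kN: "k \<le> N"
  shows "\<exists>p. p permutes {1..N} \<and> extends k p f"
proof -
  have inj: "inj_on f {1..k}" and img: "f ` {1..k} \<subseteq> {1..N}"
    using f unfolding partial_perms_def by auto
  define R2 where "R2 = {1..N} - f ` {1..k}"
  have finR2: "finite R2" unfolding R2_def by simp
  have "card R2 = card {1..N} - card (f ` {1..k})"
    unfolding R2_def by (rule card_Diff_subset[OF finite_imageI[OF finite_atLeastAtMost] img])
  also have "\<dots> = N - k" using card_image[OF inj] by simp
  finally have cR2: "card {k+1..N} = card R2" by simp
  obtain h where h: "bij_betw h {k+1..N} R2"
    using finite_same_card_bij[OF finite_atLeastAtMost finR2 cR2] by blast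
  define p where "p x = (if x \<in> {1..k} then f x else if x \<in> {k+1..N} then h x else x)" for x
  have b1: "bij_betw p {1..k} (f ` {1..k})"
    using inj_on_imp_bij_betw[OF inj] by (rule bij_betw_cong[THEN iffD1, rotated]) (simp add: p_def)
  have b2: "bij_betw p {k+1..N} R2"
    using h by (rule bij_betw_cong[THEN iffD1, rotated]) (simp add: p_def)
  have dis: "f ` {1..k} \<inter> R2 = {}" unfolding R2_def by blast
  have "bij_betw p ({1..k} \<union> {k+1..N}) (f ` {1..k} \<union> R2)"
    by (rule bij_betw_combine[OF b1 b2 dis])
  moreover have "{1..k} \<union> {k+1..N} = {1..N}" using kN by auto
  moreover have "f ` {1..k} \<union> R2 = {1..N}" using img unfolding R2_def by blast
  ultimately have "bij_betw p {1..N} {1..N}" by simp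
  then have "p permutes {1..N}"
    by (rule bij_imp_permutes) (use kN in \<open>auto simp: p_def\<close>)
  moreover have "extends k p f" by (simp add: extends_def p_def)
  ultimately show ?thesis by blast
qed
lemma indep:
  assumes f: "f \<in> partial_perms N k" and g: "g \<in> partial_perms N k"
    and kN: "k \<le> N" and lk: "l + 1 \<le> k"
    and gA: "g 1 \<in> A" and fA: "f ` {2..l+1} \<inter> A = {}"
  shows "\<not> unc_adj N l k f g"
proof
  assume adj: "unc_adj N l k f g"
  define S where "S = {perm_dist N p s | p s.
      p permutes {1..N} \<and> s permutes {1..N} \<and> extends k p f \<and> extends k s g}"
  have fin: "finite S"
  proof -
    have "S \<subseteq> (\<lambda>(p,s). perm_dist N p s) ` ({p. p permutes {1..N}} \<times> {s. s permutes {1..N}})"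
    proof
      fix x assume "x \<in> S"
      then obtain p s where "x = perm_dist N p s" "p permutes {1..N}" "s permutes {1..N}"
        unfolding S_def by blast
      then show "x \<in> (\<lambda>(p,s). perm_dist N p s) ` ({p. p permutes {1..N}} \<times> {s. s permutes {1..N}})"
        by (intro image_eqI[of _ _ "(p,s)"]) auto
    qed
    moreover have "finite ({p. p permutes {1..N}} \<times> {s. s permutes {1..N}})"
      using finite_permutations[of "{1..N}"] by auto
    ultimately show ?thesis using finite_subset by blast
  qed
  obtain p where p: "p permutes {1..N}" "extends k p f" using extension_exists[OF f kN] by blast
  obtain s where s: "s permutes {1..N}" "extends k s g" using extension_exists[OF g kN] by blast
  have "perm_dist N p s \<in> S" using p s unfolding S_def by blast
  then have ne: "S \<noteq> {}" by blast
  have mS: "Min S \<in> S" using fin ne by (rule Min_in)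
  have pd: "partial_perm_dist N k f g = Min S" unfolding partial_perm_dist_def S_def by (rule refl)
  have ml: "Min S \<le> int l" using adj unfolding unc_adj_def pd by (rule conjunct2)
  from mS obtain p s where p: "p permutes {1..N}" "extends k p f" and s: "s permutes {1..N}" "extends k s g"
    and eq: "Min S = perm_dist N p s" unfolding S_def by blast
  have d: "perm_dist N p s \<le> int l" using ml eq by simp
  have f1g1: "f 1 \<noteq> g 1" using adj unfolding unc_adj_def by simp
  have k1: "1 \<le> k" using lk by simp
  have p1: "p 1 = f 1" and s1: "s 1 = g 1" using p(2) s(2) k1 unfolding extends_def by auto
  have b: "g 1 \<in> {1..N}"
  proof -
    have "g 1 \<in> g ` {1..k}" using k1 by simp
    then show ?thesis using g unfolding partial_perms_def by blast
  qed
  have "\<bar>int (inv p (g 1)) - int (inv s (g 1))\<bar> \<le> perm_dist N p s"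
    unfolding perm_dist_def using b by (intro Max_ge) auto
  moreover have "inv s (g 1) = 1" using s1 permutes_inv_eq[OF s(1)] by metis
  ultimately have j: "inv p (g 1) \<le> l + 1" using d by linarith
  define j where "j = inv p (g 1)"
  have pj: "p j = g 1" unfolding j_def using permutes_inverses(1)[OF p(1)] by simp
  have "j \<in> {1..N}" unfolding j_def using b permutes_in_image[OF permutes_inv[OF p(1)]] by simp
  then have j1: "j \<ge> 1" by simp
  have "j \<noteq> 1" using pj p1 f1g1 by auto
  then have jr: "j \<in> {2..l+1}" using j1 j j_def by auto
  then have "j \<in> {1..k}" using lk by auto
  then have "f j = p j" using p(2) unfolding extends_def by auto
  then have "g 1 \<in> f ` {2..l+1}" using jr pj by (metis image_eqI)
  then show False using fA gA by blast
qed
lemma weight_total: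
  fixes p q :: real
  assumes "finite U" "p + q = 1"
  shows "(\<Sum>A\<in>Pow U. (\<Prod>i\<in>A. p) * (\<Prod>i\<in>U-A. q)) = 1"
  using prod_add[OF assms(1), of "\<lambda>_. p" "\<lambda>_. q"] assms(2) by simp

lemma weight_cover:
  fixes p q :: real
  assumes U: "finite U" and aU: "a \<in> U" and BU: "B \<subseteq> U" and aB: "a \<notin> B" and pq: "p + q = 1"
  shows "(\<Sum>A\<in>Pow U. if a \<in> A \<and> B \<inter> A = {} then (\<Prod>i\<in>A. p) * (\<Prod>i\<in>U-A. q) else 0)
         = p * q ^ card B"
proof -
  define f1 where "f1 i = (if i \<in> B then 0 else p)" for i
  define f2 where "f2 i = (if i = a then 0 else q)" for i
  have trm: "(\<Prod>i\<in>X. f1 i) * (\<Prod>i\<in>U-X. f2 i) =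
      (if a \<in> X \<and> B \<inter> X = {} then (\<Prod>i\<in>X. p) * (\<Prod>i\<in>U-X. q) else 0)"
    if X: "X \<in> Pow U" for X
  proof -
    have finX: "finite X" using X U finite_subset by auto
    show ?thesis
    proof (cases "a \<in> X \<and> B \<inter> X = {}")
      case True
      have "(\<Prod>i\<in>X. f1 i) = (\<Prod>i\<in>X. p)"
        by (rule prod.cong) (use True in \<open>auto simp: f1_def\<close>)
      moreover have "(\<Prod>i\<in>U-X. f2 i) = (\<Prod>i\<in>U-X. q)"
        by (rule prod.cong) (use True in \<open>auto simp: f2_def\<close>)
      ultimately show ?thesis using True by simp
    next
      case False
      then consider "a \<notin> X" | "\<exists>i. i \<in> B \<and> i \<in> X" by blast
      then show ?thesis
      proof cases
        case 1
        then have "a \<in> U - X" using aU by simp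
        moreover have "finite (U - X)" using U by simp
        ultimately have "(\<Prod>i\<in>U-X. f2 i) = 0"
          by (intro prod_zero) (auto simp: f2_def)
        then show ?thesis unfolding if_not_P[OF False] by simp
      next
        case 2
        then obtain i where "i \<in> B" "i \<in> X" by blast
        then have "(\<Prod>i\<in>X. f1 i) = 0"
          using finX by (intro prod_zero) (auto simp: f1_def)
        then show ?thesis unfolding if_not_P[OF False] by simp
      qed
    qed
  qed
  define h where "h i = (if i = a then p else if i \<in> B then q else 1)" for i
  have "(\<Sum>A\<in>Pow U. if a \<in> A \<and> B \<inter> A = {} then (\<Prod>i\<in>A. p) * (\<Prod>i\<in>U-A. q) else 0)
      = (\<Sum>X\<in>Pow U. (\<Prod>i\<in>X. f1 i) * (\<Prod>i\<in>U-X. f2 i))"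
    by (rule sum.cong) (simp_all add: trm)
  also have "\<dots> = (\<Prod>i\<in>U. f1 i + f2 i)" by (rule prod_add[OF U, symmetric])
  also have "\<dots> = (\<Prod>i\<in>U. h i)"
    by (rule prod.cong) (use aB pq in \<open>auto simp: f1_def f2_def h_def\<close>)
  also have "\<dots> = (\<Prod>i\<in>insert a B. h i)"
    by (rule prod.mono_neutral_right) (use U aU BU in \<open>auto simp: h_def\<close>)
  also have "\<dots> = h a * (\<Prod>i\<in>B. h i)"
    using aB U BU finite_subset by (subst prod.insert) auto
  also have "(\<Prod>i\<in>B. h i) = (\<Prod>i\<in>B. q)"
    by (rule prod.cong) (use aB in \<open>auto simp: h_def\<close>)
  finally show ?thesis by (simp add: h_def)
qed

lemma bern:
  fixes l :: nat
  assumes "l \<ge> 1"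
  shows "4 * real l * (1 / (2 * real l)) * (1 - 1 / (2 * real l)) ^ l \<ge> 1"
proof -
  have "-1 \<le> - (1 / (2 * real l))" using assms by (simp add: field_simps)
  from Bernoulli_inequality[OF this, of l]
  have "1 + real l * (- (1 / (2 * real l))) \<le> (1 - 1 / (2 * real l)) ^ l" by simp
  moreover have "1 + real l * (- (1 / (2 * real l))) = 1/2" using assms by (simp add: field_simps)
  ultimately have q: "(1 - 1 / (2 * real l)) ^ l \<ge> 1/2" by simp
  have "4 * real l * (1 / (2 * real l)) = 2" using assms by (simp add: field_simps)
  then show ?thesis using q by simp
qed

theorem mainTheorem4:
  fixes N l k :: nat
  assumes "N \<ge> 1" and "l \<ge> 1" and "l + 1 \<le> k" and "k \<le> N"
  shows "fractional_chromatic_number (partial_perms N k) (unc_adj N l k) \<le> 4 * real l"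
proof -
  define V where "V = partial_perms N k"
  define U where "U = {1..N}"
  define p :: real where "p = 1 / (2 * real l)"
  define q :: real where "q = 1 - p"
  define c :: real where "c = 4 * real l"
  define W where "W A = (\<Prod>i\<in>A. p) * (\<Prod>i\<in>U-A. q)" for A
  define J where "J A = {f\<in>V. f 1 \<in> A \<and> f ` {2..l+1} \<inter> A = {}}" for A
  have finU: "finite U" unfolding U_def by simp
  have pq: "p + q = 1" unfolding q_def by simp
  have p0: "p \<ge> 0" unfolding p_def by simp
  have q0: "q \<ge> 0" unfolding q_def p_def using assms(2) by (simp add: field_simps)
  have c0: "c \<ge> 0" unfolding c_def by simp
  define t where "t = card (Pow U)"
  obtain e where e: "bij_betw e {0..<t} (Pow U)"
    using ex_bij_betw_nat_finite[of "Pow U"] finU unfolding t_def by auto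
  define I where "I j = J (e j)" for j
  define ws where "ws j = c * W (e j)" for j
  have W0: "W A \<ge> 0" for A unfolding W_def using p0 q0 by (simp add: prod_nonneg)
  have indep_I: "independent_set V (unc_adj N l k) (I j)" for j
    unfolding independent_set_def I_def J_def
  proof (intro conjI ballI)
    fix u v assume u: "u \<in> {f \<in> V. f 1 \<in> e j \<and> f ` {2..l + 1} \<inter> e j = {}}"
      and v: "v \<in> {f \<in> V. f 1 \<in> e j \<and> f ` {2..l + 1} \<inter> e j = {}}"
    show "\<not> unc_adj N l k u v"
      by (rule indep[of u N k v l "e j"]) (use u v assms in \<open>auto simp: V_def\<close>)
  qed auto
  have sum_total: "(\<Sum>j<t. ws j) = c"
  proof -
    have "(\<Sum>j<t. ws j) = (\<Sum>j\<in>{0..<t}. c * W (e j))" by (simp add: ws_def atLeast0LessThan)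
    also have "\<dots> = (\<Sum>A\<in>Pow U. c * W A)" by (rule sum.reindex_bij_betw[OF e])
    also have "\<dots> = c * (\<Sum>A\<in>Pow U. W A)" by (simp add: sum_distrib_left)
    also have "(\<Sum>A\<in>Pow U. W A) = 1" unfolding W_def by (rule weight_total[OF finU pq])
    finally show ?thesis by simp
  qed
  have cover: "(\<Sum>j\<in>{j. j < t \<and> u \<in> I j}. ws j) \<ge> 1" if u: "u \<in> V" for u
  proof -
    have inj: "inj_on u {1..k}" and img: "u ` {1..k} \<subseteq> {1..N}"
      using u unfolding V_def partial_perms_def by auto
    define B where "B = u ` {2..l+1}"
    have sub: "{2..l+1} \<subseteq> {1..k}" using assms by auto
    have cB: "card B = l" unfolding B_def using card_image[OF inj_on_subset[OF inj sub]] by simp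
    have BU: "B \<subseteq> U" unfolding B_def U_def using sub img by blast
    have aU: "u 1 \<in> U"
    proof -
      have "u 1 \<in> u ` {1..k}" using assms by simp
      then show ?thesis unfolding U_def using img by blast
    qed
    have aB: "u 1 \<notin> B"
    proof
      assume "u 1 \<in> B"
      then obtain j where j: "j \<in> {2..l+1}" "u j = u 1" unfolding B_def by auto
      have "j \<in> {1..k}" using j(1) sub by blast
      moreover have "(1::nat) \<in> {1..k}" using assms by simp
      ultimately have "j = 1" using inj_onD[OF inj j(2)] by blast
      then show False using j by simp
    qed
    have eqs: "{j. j < t \<and> u \<in> I j} = {j\<in>{0..<t}. u \<in> I j}" by auto
    have "(\<Sum>j\<in>{j. j < t \<and> u \<in> I j}. ws j) = (\<Sum>j\<in>{j\<in>{0..<t}. u \<in> I j}. ws j)"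
      unfolding eqs ..
    also have "\<dots> = (\<Sum>j\<in>{0..<t}. if u \<in> I j then ws j else 0)"
      by (rule sum.inter_filter) simp
    also have "\<dots> = (\<Sum>j\<in>{0..<t}. if u \<in> J (e j) then c * W (e j) else 0)"
      unfolding I_def ws_def ..
    also have "\<dots> = (\<Sum>A\<in>Pow U. if u \<in> J A then c * W A else 0)"
      by (rule sum.reindex_bij_betw[OF e])
    also have "\<dots> = (\<Sum>A\<in>Pow U. c * (if u 1 \<in> A \<and> B \<inter> A = {} then W A else 0))"
      by (rule sum.cong) (use u in \<open>auto simp: J_def B_def\<close>)
    also have "\<dots> = c * (\<Sum>A\<in>Pow U. (if u 1 \<in> A \<and> B \<inter> A = {} then W A else 0))"
      by (simp add: sum_distrib_left)
    also have "(\<Sum>A\<in>Pow U. (if u 1 \<in> A \<and> B \<inter> A = {} then W A else 0)) = p * q ^ card B"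
      unfolding W_def by (rule weight_cover[OF finU aU BU aB pq])
    finally have "(\<Sum>j\<in>{j. j < t \<and> u \<in> I j}. ws j) = c * p * q ^ l" using cB by simp
    moreover have "c * p * q ^ l \<ge> 1" unfolding c_def p_def q_def using bern[OF assms(2)] by simp
    ultimately show ?thesis by simp
  qed
  have mem: "fractional_colouring_weight V (unc_adj N l k) c"
    unfolding fractional_colouring_weight_def
    using indep_I W0 c0 sum_total cover by (intro exI[of _ I] exI[of _ ws] exI[of _ t]) (auto simp: ws_def)
  have bdd: "bdd_below {w. fractional_colouring_weight V (unc_adj N l k) w}"
  proof (rule bdd_belowI[of _ 0])
    fix w assume "w \<in> {w. fractional_colouring_weight V (unc_adj N l k) w}"
    then show "0 \<le> w"
      unfolding mem_Collect_eq fractional_colouring_weight_def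
      by (elim exE conjE) (metis lessThan_iff sum_nonneg)
  qed
  have "fractional_chromatic_number V (unc_adj N l k) \<le> c"
    unfolding fractional_chromatic_number_def using mem bdd by (intro cInf_lower) auto
  then show ?thesis unfolding V_def c_def .
qed

end
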